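(* Let $\mathcal{P}$ be a hereditary property of ordered graphs, and let $k,M \geqslant 0$ be integers. Suppose that for every $G \in \mathcal{P}$, the homogeneous block sequence $t_1\geqslant t_2\geqslant\dots$ of $G$ satisfies $\sum_{i = k+2}^\infty t_i \leqslant M$. Then $|\mathcal{P}_n| = O(n^k)$ as $n\to\infty$.
   Context: Ordered graphs of order $n$ have vertex set $[n]$ with the natural order; a hereditary property is a collection of ordered graphs closed under order-preserving isomorphism and induced ordered subgraphs; $\mathcal{P}_n$ is the set of members with vertex set $[n]$. A homogeneous block of $G$ is a maximal set $B$ of consecutive vertices such that $\Gamma(x)\setminus\{y\}=\Gamma(y)\setminus\{x\}$ for all $x,y\in B$ ($\Gamma$ denoting neighbourhood); these partition $V(G)$ uniquely. The homogeneous block sequence of $G$ is $t_1\geqslant t_2\geqslant\dots$, the orders of the homogeneous blocks of $G$ in non-increasing order, with $t_i=0$ for $i$ larger than the number of blocks. *)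

theory Defs
  imports Main "HOL-Library.Multiset" "HOL-Library.Landau_Symbols"
begin

text \<open>Since two ordered graphs on {1..n} are order-isomorphic iff equal, a property
  is represented by the set of pairs (n, E) of its members on vertex set [n].\<close>

definition ograph :: "nat \<Rightarrow> (nat \<times> nat) set \<Rightarrow> bool" where
  "ograph n E \<longleftrightarrow> E \<subseteq> {1..n} \<times> {1..n} \<and> sym E \<and> (\<forall>x. (x, x) \<notin> E)"

definition induced_sub :: "nat \<Rightarrow> (nat \<Rightarrow> nat) \<Rightarrow> (nat \<times> nat) set \<Rightarrow> (nat \<times> nat) set" where
  "induced_sub m f E = {(i, j). i \<in> {1..m} \<and> j \<in> {1..m} \<and> (f i, f j) \<in> E}"

definition hereditary :: "(nat \<times> (nat \<times> nat) set) set \<Rightarrow> bool" where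
  "hereditary P \<longleftrightarrow>
     (\<forall>(n, E) \<in> P. ograph n E) \<and>
     (\<forall>n E m f. (n, E) \<in> P \<longrightarrow> strict_mono_on {1..m} f \<longrightarrow> f ` {1..m} \<subseteq> {1..n}
        \<longrightarrow> (m, induced_sub m f E) \<in> P)"

definition members :: "(nat \<times> (nat \<times> nat) set) set \<Rightarrow> nat \<Rightarrow> (nat \<times> nat) set set" where
  "members P n = {E. (n, E) \<in> P}"

definition nbhd :: "(nat \<times> nat) set \<Rightarrow> nat \<Rightarrow> nat set" where
  "nbhd E x = {y. (x, y) \<in> E}"

definition homog_set :: "nat \<Rightarrow> (nat \<times> nat) set \<Rightarrow> nat set \<Rightarrow> bool" where
  "homog_set n E B \<longleftrightarrow> (\<exists>a b. 1 \<le> a \<and> a \<le> b \<and> b \<le> n \<and> B = {a..b}) \<and>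
     (\<forall>x\<in>B. \<forall>y\<in>B. nbhd E x - {y} = nbhd E y - {x})"

definition homog_blocks :: "nat \<Rightarrow> (nat \<times> nat) set \<Rightarrow> nat set set" where
  "homog_blocks n E = {B. homog_set n E B \<and> (\<forall>B'. homog_set n E B' \<and> B \<subseteq> B' \<longrightarrow> B' = B)}"

text \<open>Homogeneous block sequence t_1 >= t_2 >= ..., as a list (t_i = 0 beyond its length).\<close>
definition block_seq :: "nat \<Rightarrow> (nat \<times> nat) set \<Rightarrow> nat list" where
  "block_seq n E = rev (sorted_list_of_multiset (image_mset card (mset_set (homog_blocks n E))))"

end

theory Submission
  imports Defs
begin

lemma sum_pow_le: "(\<Sum>i\<le>k. (b::nat)^i) \<le> (k+1) * b^k" if "b \<ge> 1"
proof -
  have "(\<Sum>i\<le>k. b^i) \<le> (\<Sum>i\<le>k. b^k)"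
    by (intro sum_mono power_increasing) (use that in auto)
  also have "\<dots> = (k+1) * b^k" by simp
  finally show ?thesis .
qed

lemma card_short_lists: "card {ys::nat list. set ys \<subseteq> {0..n} \<and> length ys \<le> k} \<le> (k+1) * (n+1)^k"
  using card_lists_length_le[of "{0..n}" k] sum_pow_le[of "n+1" k] by simp

lemma map_min_filter_inj:
  fixes M :: nat
  shows "map (\<lambda>x. min x (M+1)) xs = map (\<lambda>x. min x (M+1)) ys \<Longrightarrow>
    filter (\<lambda>x. M < x) xs = filter (\<lambda>x. M < x) ys \<Longrightarrow> xs = ys"
proof (induction xs arbitrary: ys)
  case Nil then show ?case by simp
next
  case (Cons a xs)
  then obtain b ys' where ys: "ys = b # ys'" by (cases ys) auto
  show ?case
  proof (cases "M < a")
    case True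
    with Cons ys have "M < b" by (auto simp: min_def split: if_splits)
    with Cons ys True show ?thesis by auto
  next
    case False
    with Cons ys have "b = a" by (auto simp: min_def split: if_splits)
    with Cons ys False show ?thesis by auto
  qed
qed

lemma map_min_small:
  fixes M :: nat
  shows "map (\<lambda>x. min x (M+1)) xs = map (\<lambda>x. min x (M+1)) ys \<Longrightarrow>
    filter (\<lambda>x. \<not> M < x) xs = filter (\<lambda>x. \<not> M < x) ys \<and>
    length (filter (\<lambda>x. M < x) xs) = length (filter (\<lambda>x. M < x) ys)"
proof (induction xs arbitrary: ys)
  case Nil then show ?case by simp
next
  case (Cons a xs)
  then obtain b ys' where ys: "ys = b # ys'" by (cases ys) auto
  from Cons ys have "M < a \<longleftrightarrow> M < b" by (auto simp: min_def split: if_splits)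
  moreover from Cons ys have "\<not> M < a \<Longrightarrow> b = a" by (auto simp: min_def split: if_splits)
  ultimately show ?case using Cons ys by auto
qed

lemma sum_list_split_filter: "sum_list (xs::nat list) = sum_list (filter P xs) + sum_list (filter (\<lambda>x. \<not> P x) xs)"
  by (induction xs) auto

lemma butlast_sum_eq:
  assumes "butlast (as::nat list) = butlast bs" "length as = length bs" "sum_list as = sum_list bs"
  shows "as = bs"
proof (cases "as = []")
  case True then show ?thesis using assms by simp
next
  case False
  then have "bs \<noteq> []" using assms by auto
  have a: "as = butlast as @ [last as]" using False by simp
  have b: "bs = butlast bs @ [last bs]" using \<open>bs \<noteq> []\<close> by simp
  have "sum_list as = sum_list (butlast as) + last as" by (subst a) simp
  moreover have "sum_list bs = sum_list (butlast bs) + last bs" by (subst b) simp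
  ultimately have "last as = last bs" using assms by simp
  then show ?thesis using a b assms by metis
qed

definition Gset :: "nat \<Rightarrow> nat \<Rightarrow> nat \<Rightarrow> nat \<Rightarrow> nat list set" where
  "Gset L M k n = {g. length g \<le> L \<and> sum_list g = n \<and> length (filter (\<lambda>x. M < x) g) \<le> k+1}"

lemma card_Gset:
  "card (Gset L M k n) \<le> card {xs. set xs \<subseteq> {0..M+1} \<and> length xs \<le> L} * ((k+1) * (n+1)^k)"
proof -
  let ?c = "\<lambda>x::nat. min x (M+1)"
  let ?p = "\<lambda>x::nat. M < x"
  let ?f = "\<lambda>g. (map ?c g, butlast (filter ?p g))"
  let ?A = "{xs. set xs \<subseteq> {0..M+1} \<and> length xs \<le> L}"
  let ?B = "{ys::nat list. set ys \<subseteq> {0..n} \<and> length ys \<le> k}"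
  have inj: "inj_on ?f (Gset L M k n)"
  proof (rule inj_onI)
    fix g h assume g: "g \<in> Gset L M k n" and h: "h \<in> Gset L M k n" and e: "?f g = ?f h"
    then have m: "map ?c g = map ?c h" and bl: "butlast (filter ?p g) = butlast (filter ?p h)" by auto
    from map_min_small[OF m] have s: "filter (\<lambda>x. \<not> ?p x) g = filter (\<lambda>x. \<not> ?p x) h"
      and l: "length (filter ?p g) = length (filter ?p h)" by auto
    have "sum_list g = sum_list h" using g h by (simp add: Gset_def)
    then have "sum_list (filter ?p g) = sum_list (filter ?p h)"
      using sum_list_split_filter[of g ?p] sum_list_split_filter[of h ?p] s by simp
    then have "filter ?p g = filter ?p h" using butlast_sum_eq[OF bl l] by simp
    then show "g = h" using map_min_filter_inj[OF m] by simp
  qed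
  have sub: "?f ` Gset L M k n \<subseteq> ?A \<times> ?B"
  proof
    fix z assume "z \<in> ?f ` Gset L M k n"
    then obtain g where g: "g \<in> Gset L M k n" and z: "z = ?f g" by auto
    have "set (map ?c g) \<subseteq> {0..M+1}" by auto
    moreover have "length (map ?c g) \<le> L" using g by (simp add: Gset_def)
    moreover have "set (butlast (filter ?p g)) \<subseteq> {0..n}"
    proof
      fix x assume "x \<in> set (butlast (filter ?p g))"
      then have "x \<in> set g" by (meson filter_is_subset in_set_butlastD subsetD)
      then have "x \<le> sum_list g" by (simp add: member_le_sum_list)
      then show "x \<in> {0..n}" using g by (simp add: Gset_def)
    qed
    moreover have "length (butlast (filter ?p g)) \<le> k" using g by (simp add: Gset_def) linarith
    ultimately show "z \<in> ?A \<times> ?B" using z by simp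
  qed
  have fin: "finite (?A \<times> ?B)"
    by (intro finite_cartesian_product finite_lists_length_le) auto
  have "card (Gset L M k n) \<le> card (?A \<times> ?B)"
    by (rule card_inj_on_le[OF inj sub fin])
  also have "\<dots> = card ?A * card ?B" by (simp add: card_cartesian_product)
  also have "\<dots> \<le> card ?A * ((k+1) * (n+1)^k)"
    using card_short_lists[of n k] by simp
  finally show ?thesis .
qed

definition twin :: "(nat \<times> nat) set \<Rightarrow> nat \<Rightarrow> nat \<Rightarrow> bool" where
  "twin E x y \<longleftrightarrow> nbhd E x - {y} = nbhd E y - {x}"

lemma twin_refl: "twin E x x" by (simp add: twin_def)
lemma twin_sym: "twin E x y \<Longrightarrow> twin E y x" by (simp add: twin_def)

lemma twin_iff: "twin E x y \<longleftrightarrow> (\<forall>w. ((x,w) \<in> E \<and> w \<noteq> y) \<longleftrightarrow> ((y,w) \<in> E \<and> w \<noteq> x))"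
  by (auto simp: twin_def nbhd_def set_eq_iff)

lemma twin_trans:
  assumes g: "ograph n E" and h1: "twin E x y" and h2: "twin E y z"
  shows "twin E x z"
proof (cases "x = z \<or> x = y \<or> y = z")
  case True then show ?thesis using h1 h2 twin_refl by auto
next
  case False
  have sy: "\<And>a b. (a,b) \<in> E \<longleftrightarrow> (b,a) \<in> E" using g unfolding ograph_def sym_def by blast
  have ir: "\<And>a. (a,a) \<notin> E" using g unfolding ograph_def by blast
  have a1: "\<And>w. ((x,w) \<in> E \<and> w \<noteq> y) \<longleftrightarrow> ((y,w) \<in> E \<and> w \<noteq> x)" using h1 twin_iff by blast
  have a2: "\<And>w. ((y,w) \<in> E \<and> w \<noteq> z) \<longleftrightarrow> ((z,w) \<in> E \<and> w \<noteq> y)" using h2 twin_iff by blast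
  have xz: "(x,z) \<in> E \<longleftrightarrow> (y,z) \<in> E" using a1[of z] False by auto
  have yx: "(y,x) \<in> E \<longleftrightarrow> (z,x) \<in> E" using a2[of x] False by auto
  have key: "(x,y) \<in> E \<longleftrightarrow> (z,y) \<in> E" using xz yx sy by blast
  show ?thesis unfolding twin_iff
  proof
    fix w
    show "((x,w) \<in> E \<and> w \<noteq> z) \<longleftrightarrow> ((z,w) \<in> E \<and> w \<noteq> x)"
    proof (cases "w = x \<or> w = y \<or> w = z")
      case True then show ?thesis using key ir False by auto
    next
      case False then show ?thesis using a1[of w] a2[of w] by auto
    qed
  qed
qed

lemma edge_transfer:
  assumes g: "ograph n E" and tx: "twin E x x'" and ty: "twin E y y'"
    and d: "x \<noteq> y" "x' \<noteq> y'" and e: "(x,y) \<in> E"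
  shows "(x',y') \<in> E"
proof -
  have sy: "\<And>a b. (a,b) \<in> E \<longleftrightarrow> (b,a) \<in> E" using g unfolding ograph_def sym_def by blast
  have a1: "\<And>w. ((x,w) \<in> E \<and> w \<noteq> x') \<longleftrightarrow> ((x',w) \<in> E \<and> w \<noteq> x)" using tx twin_iff by blast
  have a2: "\<And>w. ((y,w) \<in> E \<and> w \<noteq> y') \<longleftrightarrow> ((y',w) \<in> E \<and> w \<noteq> y)" using ty twin_iff by blast
  show ?thesis
  proof (cases "x' = y")
    case False
    have "(x',y) \<in> E" using a1[of y] e False d by (cases "x = x'") auto
    then have "(y,x') \<in> E" using sy by blast
    then have "(y',x') \<in> E" using a2[of x'] d by (cases "y = y'") auto
    then show ?thesis using sy by blast
  next
    case True
    show ?thesis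
    proof (cases "x = y'")
      case True
      then show ?thesis using \<open>x' = y\<close> e sy by blast
    next
      case False
      have "(y,x) \<in> E" using e sy by blast
      then have "(y',x) \<in> E" using a2[of x] False d by auto
      then have "(x,y') \<in> E" using sy by blast
      then show ?thesis using a1[of y'] False d \<open>x' = y\<close> by auto
    qed
  qed
qed

lemma homog_set_twin: "homog_set n E B \<Longrightarrow> x \<in> B \<Longrightarrow> y \<in> B \<Longrightarrow> twin E x y"
  by (simp add: homog_set_def twin_def)

lemma homog_union:
  assumes g: "ograph n E" and h1: "homog_set n E B1" and h2: "homog_set n E B2"
    and i: "B1 \<inter> B2 \<noteq> {}"
  shows "homog_set n E (B1 \<union> B2)"
proof -
  obtain a1 b1 where B1: "1 \<le> a1" "a1 \<le> b1" "b1 \<le> n" "B1 = {a1..b1}" using h1 homog_set_def by auto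
  obtain a2 b2 where B2: "1 \<le> a2" "a2 \<le> b2" "b2 \<le> n" "B2 = {a2..b2}" using h2 homog_set_def by auto
  obtain z where z: "z \<in> B1" "z \<in> B2" using i by auto
  have "B1 \<union> B2 = {min a1 a2..max b1 b2}"
    using B1 B2 z by (auto simp: min_def max_def)
  moreover have "1 \<le> min a1 a2" "min a1 a2 \<le> max b1 b2" "max b1 b2 \<le> n" using B1 B2 by auto
  moreover have "\<forall>x\<in>B1 \<union> B2. \<forall>y\<in>B1 \<union> B2. twin E x y"
  proof (intro ballI)
    fix x y assume x: "x \<in> B1 \<union> B2" and y: "y \<in> B1 \<union> B2"
    have tz: "\<And>w. w \<in> B1 \<union> B2 \<Longrightarrow> twin E w z"
      using homog_set_twin[OF h1] homog_set_twin[OF h2] z by blast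
    show "twin E x y" using twin_trans[OF g tz[OF x] twin_sym[OF tz[OF y]]] .
  qed
  ultimately show ?thesis unfolding homog_set_def twin_def by blast
qed

lemma homog_set_sub: "homog_set n E B \<Longrightarrow> B \<subseteq> {1..n}"
  by (auto simp: homog_set_def)

lemma homog_blocks_disj:
  assumes g: "ograph n E" and "B1 \<in> homog_blocks n E" "B2 \<in> homog_blocks n E" "B1 \<inter> B2 \<noteq> {}"
  shows "B1 = B2"
proof -
  have h: "homog_set n E B1" "homog_set n E B2" using assms by (auto simp: homog_blocks_def)
  have u: "homog_set n E (B1 \<union> B2)" using homog_union[OF g h assms(4)] .
  have "B1 \<union> B2 = B1" using assms(2) u by (auto simp: homog_blocks_def)
  moreover have "B1 \<union> B2 = B2" using assms(3) u by (auto simp: homog_blocks_def)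
  ultimately show ?thesis by simp
qed

lemma homog_blocks_cover:
  assumes x: "x \<in> {1..n}"
  shows "\<exists>B \<in> homog_blocks n E. x \<in> B"
proof -
  define F where "F = {B. homog_set n E B \<and> x \<in> B}"
  have "F \<subseteq> Pow {1..n}"
  proof
    fix B assume "B \<in> F"
    then have "homog_set n E B" by (simp add: F_def)
    then show "B \<in> Pow {1..n}" using homog_set_sub[of n E B] by simp
  qed
  then have fin: "finite F" by (rule finite_subset) simp
  have "homog_set n E {x..x}" unfolding homog_set_def
  proof (rule conjI)
    show "\<exists>a b. 1 \<le> a \<and> a \<le> b \<and> b \<le> n \<and> {x..x} = {a..b}" 
    proof -
      have "1 \<le> x \<and> x \<le> x \<and> x \<le> n \<and> {x..x} = {x..x}" using x by simp
      then show ?thesis by blast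
    qed
    show "\<forall>u\<in>{x..x}. \<forall>v\<in>{x..x}. nbhd E u - {v} = nbhd E v - {u}" by simp
  qed
  then have "{x..x} \<in> F" unfolding F_def by auto
  then have ne: "card ` F \<noteq> {}" by auto
  have "Max (card ` F) \<in> card ` F" using fin ne by (intro Max_in) auto
  then obtain B where B: "B \<in> F" "card B = Max (card ` F)" by auto
  have "B \<in> homog_blocks n E"
    unfolding homog_blocks_def
  proof (intro CollectI conjI allI impI)
    show "homog_set n E B" using B(1) unfolding F_def by blast
    fix B' assume a: "homog_set n E B' \<and> B \<subseteq> B'"
    then have "B' \<in> F" using B(1) unfolding F_def by blast
    then have "card B' \<le> card B" using B fin by (simp add: Max_ge)
    have "B' \<subseteq> {1..n}" using a homog_set_sub by blast
    then have "finite B'" by (rule finite_subset) simp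
    moreover note \<open>card B' \<le> card B\<close>
    ultimately have "card B = card B'" using a card_mono[of B' B] by simp
    then show "B' = B" using a card_subset_eq[of B' B] \<open>finite B'\<close> by simp
  qed
  then show ?thesis using B(1) unfolding F_def by blast
qed

lemma homog_blocks_interval:
  "B \<in> homog_blocks n E \<Longrightarrow> \<exists>a b. 1 \<le> a \<and> a \<le> b \<and> b \<le> n \<and> B = {a..b}"
  unfolding homog_blocks_def homog_set_def by blast

lemma homog_blocks_finite: "finite (homog_blocks n E)"
proof -
  have "homog_blocks n E \<subseteq> Pow {1..n}" using homog_set_sub unfolding homog_blocks_def by blast
  then show ?thesis by (rule finite_subset) simp
qed

lemma homog_blocks_twin: "B \<in> homog_blocks n E \<Longrightarrow> x \<in> B \<Longrightarrow> y \<in> B \<Longrightarrow> twin E x y"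
  unfolding homog_blocks_def using homog_set_twin by blast

definition st :: "nat set \<Rightarrow> nat \<Rightarrow> nat" where
  "st S x = Max {s\<in>S. s \<le> x}"

definition starts :: "nat \<Rightarrow> (nat \<times> nat) set \<Rightarrow> nat set" where
  "starts n E = Min ` homog_blocks n E"

definition codeA :: "nat \<Rightarrow> (nat \<times> nat) set \<Rightarrow> (nat \<times> nat) set" where
  "codeA n E = {(st (starts n E) x, st (starts n E) y) | x y. (x, y) \<in> E}"

definition recon :: "nat \<Rightarrow> nat set \<Rightarrow> (nat \<times> nat) set \<Rightarrow> (nat \<times> nat) set" where
  "recon n S A = {(x, y). x \<in> {1..n} \<and> y \<in> {1..n} \<and> x \<noteq> y \<and> (st S x, st S y) \<in> A}"

lemma blk_min:
  assumes "B \<in> homog_blocks n E"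
  obtains a b where "1 \<le> a" "a \<le> b" "b \<le> n" "B = {a..b}" "Min B = a"
proof -
  obtain a b where ab: "1 \<le> a" "a \<le> b" "b \<le> n" "B = {a..b}" using homog_blocks_interval[OF assms] by blast
  have "Min {a..b} = a" by (rule Min_eqI) (use ab in auto)
  then show ?thesis using that ab by simp
qed

lemma blk_min_in: "B \<in> homog_blocks n E \<Longrightarrow> Min B \<in> B"
  by (metis atLeastAtMost_iff blk_min order_refl)

lemma min_inj:
  assumes g: "ograph n E" and "B1 \<in> homog_blocks n E" "B2 \<in> homog_blocks n E" "Min B1 = Min B2"
  shows "B1 = B2"
proof -
  have "Min B1 \<in> B1 \<inter> B2" using blk_min_in assms by (metis IntI)
  then show ?thesis using homog_blocks_disj[OF g assms(2,3)] by blast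
qed

lemma st_block:
  assumes g: "ograph n E" and B: "B \<in> homog_blocks n E" and x: "x \<in> B"
  shows "st (starts n E) x = Min B"
  unfolding st_def
proof (rule Max_eqI)
  have "finite (starts n E)" unfolding starts_def using homog_blocks_finite by simp
  then show "finite {s \<in> starts n E. s \<le> x}" by simp
  obtain a b where b: "1 \<le> a" "a \<le> b" "b \<le> n" "B = {a..b}" "Min B = a" using blk_min[OF B] by blast
  have "Min B \<le> x" using x b by auto
  moreover have "Min B \<in> starts n E" using B unfolding starts_def by (rule imageI)
  ultimately show "Min B \<in> {s \<in> starts n E. s \<le> x}" by simp
  fix s assume s: "s \<in> {s \<in> starts n E. s \<le> x}"
  then obtain B' where B': "B' \<in> homog_blocks n E" "s = Min B'" "s \<le> x" unfolding starts_def by auto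
  show "s \<le> Min B"
  proof (rule ccontr)
    assume "\<not> s \<le> Min B"
    then have "s \<in> B" using b x B' by auto
    moreover have "s \<in> B'" using B' blk_min_in by simp
    ultimately have "B = B'" using homog_blocks_disj[OF g B B'(1)] by blast
    then show False using \<open>\<not> s \<le> Min B\<close> B' by simp
  qed
qed

lemma block_of:
  assumes "x \<in> {1..n}"
  obtains B where "B \<in> homog_blocks n E" "x \<in> B"
  using homog_blocks_cover[OF assms] by blast

lemma st_twin:
  assumes g: "ograph n E" and x: "x \<in> {1..n}" and y: "y \<in> {1..n}"
    and e: "st (starts n E) x = st (starts n E) y"
  shows "twin E x y"
proof -
  obtain Bx where Bx: "Bx \<in> homog_blocks n E" "x \<in> Bx" using block_of[OF x] by blast
  obtain By where By: "By \<in> homog_blocks n E" "y \<in> By" using block_of[OF y] by blast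
  have "Min Bx = Min By" using st_block[OF g Bx] st_block[OF g By] e by simp
  then have "Bx = By" using min_inj[OF g Bx(1) By(1)] by simp
  then show ?thesis using homog_blocks_twin Bx By by simp
qed

lemma ograph_E:
  assumes "ograph n E"
  shows "E \<subseteq> {1..n} \<times> {1..n}" "\<And>x. (x,x) \<notin> E"
  using assms unfolding ograph_def by auto

lemma reconstruct:
  assumes g: "ograph n E"
  shows "recon n (starts n E) (codeA n E) = E"
proof
  show "E \<subseteq> recon n (starts n E) (codeA n E)"
  proof
    fix p assume p: "p \<in> E"
    obtain x y where xy: "p = (x,y)" by (cases p)
    have "x \<in> {1..n}" "y \<in> {1..n}" using ograph_E(1)[OF g] p xy by auto
    moreover have "x \<noteq> y" using ograph_E(2)[OF g] p xy by auto
    moreover have "(st (starts n E) x, st (starts n E) y) \<in> codeA n E" using p xy unfolding codeA_def by blast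
    ultimately show "p \<in> recon n (starts n E) (codeA n E)" unfolding recon_def xy by simp
  qed
next
  show "recon n (starts n E) (codeA n E) \<subseteq> E"
  proof
    fix p assume p: "p \<in> recon n (starts n E) (codeA n E)"
    obtain x y where xy: "p = (x,y)" by (cases p)
    have x: "x \<in> {1..n}" and y: "y \<in> {1..n}" and d: "x \<noteq> y"
      and c: "(st (starts n E) x, st (starts n E) y) \<in> codeA n E"
      using p unfolding xy recon_def by auto
    obtain x' y' where e: "(x',y') \<in> E" and ex: "st (starts n E) x = st (starts n E) x'"
      and ey: "st (starts n E) y = st (starts n E) y'"
      using c unfolding codeA_def by blast
    have x': "x' \<in> {1..n}" and y': "y' \<in> {1..n}" using ograph_E(1)[OF g] e by auto
    have d': "x' \<noteq> y'" using ograph_E(2)[OF g] e by auto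
    have "twin E x' x" using st_twin[OF g x' x] ex by simp
    moreover have "twin E y' y" using st_twin[OF g y' y] ey by simp
    ultimately have "(x,y) \<in> E" using edge_transfer[OF g _ _ d' d e] by blast
    then show "p \<in> E" using xy by simp
  qed
qed

lemma starts_props:
  assumes g: "ograph n E" and n: "1 \<le> n"
  shows "starts n E \<subseteq> {1..n}" "1 \<in> starts n E" "finite (starts n E)"
    "card (starts n E) = card (homog_blocks n E)"
proof -
  show "starts n E \<subseteq> {1..n}"
  proof
    fix s assume "s \<in> starts n E"
    then obtain B where B: "B \<in> homog_blocks n E" "s = Min B" unfolding starts_def by auto
    then show "s \<in> {1..n}" using blk_min[OF B(1)] by (metis atLeastAtMost_iff le_trans)
  qed
  obtain B where B: "B \<in> homog_blocks n E" "1 \<in> B" using block_of[of 1 n E] n by auto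
  obtain a b where b: "1 \<le> a" "a \<le> b" "b \<le> n" "B = {a..b}" "Min B = a" using blk_min[OF B(1)] by blast
  have "Min B = 1" using b B(2) by auto
  then show "1 \<in> starts n E" using B unfolding starts_def by force
  show "finite (starts n E)" unfolding starts_def using homog_blocks_finite by simp
  have "inj_on Min (homog_blocks n E)" using min_inj[OF g] by (meson inj_onI)
  then show "card (starts n E) = card (homog_blocks n E)" unfolding starts_def by (rule card_image)
qed

lemma st_in:
  assumes "finite S" "s0 \<in> S" "s0 \<le> x"
  shows "st S x \<in> S" "st S x \<le> x"
proof -
  have "{s\<in>S. s \<le> x} \<noteq> {}" "finite {s\<in>S. s \<le> x}" using assms by auto
  then have "st S x \<in> {s\<in>S. s \<le> x}" unfolding st_def by (rule Max_in[rotated])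
  then show "st S x \<in> S" "st S x \<le> x" by auto
qed

lemma codeA_sub:
  assumes g: "ograph n E" and n: "1 \<le> n"
  shows "codeA n E \<subseteq> starts n E \<times> starts n E"
proof
  fix p assume "p \<in> codeA n E"
  then obtain x y where p: "p = (st (starts n E) x, st (starts n E) y)" "(x,y) \<in> E" unfolding codeA_def by blast
  then have "x \<in> {1..n}" "y \<in> {1..n}" using ograph_E(1)[OF g] by auto
  then show "p \<in> starts n E \<times> starts n E" using p st_in[OF starts_props(3,2)[OF g n]] by auto
qed

fun gaps :: "nat list \<Rightarrow> nat list" where
  "gaps (a # b # xs) = (b - a) # gaps (b # xs)"
| "gaps _ = []"

lemma length_gaps: "length (gaps xs) = length xs - 1"
  by (induction xs rule: gaps.induct) auto

lemma sorted_last_ge: "sorted (b # xs) \<Longrightarrow> b \<le> last (b # xs)"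
  by (induction xs arbitrary: b) auto

lemma sum_gaps: "sorted xs \<Longrightarrow> xs \<noteq> [] \<Longrightarrow> sum_list (gaps xs) = last xs - hd xs"
proof (induction xs rule: gaps.induct)
  case (1 a b xs)
  then have "b \<le> last (b # xs)" using sorted_last_ge by simp
  moreover have "a \<le> b" using "1.prems" by simp
  ultimately show ?case using 1 by simp
qed auto

lemma nth_gaps: "i < length xs - 1 \<Longrightarrow> gaps xs ! i = xs ! Suc i - xs ! i"
proof (induction xs arbitrary: i rule: gaps.induct)
  case (1 a b xs)
  then show ?case by (cases i) auto
qed auto

lemma gaps_nil: "gaps ys = [] \<Longrightarrow> ys \<noteq> [] \<Longrightarrow> \<exists>v. ys = [v]"
  by (cases ys rule: gaps.cases) auto

lemma gaps_inj: "sorted xs \<Longrightarrow> sorted ys \<Longrightarrow> xs \<noteq> [] \<Longrightarrow> ys \<noteq> [] \<Longrightarrow> hd xs = hd ys \<Longrightarrow>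
  gaps xs = gaps ys \<Longrightarrow> xs = ys"
proof (induction xs arbitrary: ys rule: gaps.induct)
  case (1 a b xs)
  then obtain c ys' where ys: "ys = a # c # ys'"
    by (cases ys rule: gaps.cases) auto
  have "b - a = c - a" "a \<le> b" "a \<le> c" using 1 ys by auto
  then have "b = c" by simp
  have "b # xs = c # ys'"
    using "1.IH"[of "c # ys'"] "1.prems" ys \<open>b = c\<close> by auto
  then show ?case using ys by simp
qed (auto dest: gaps_nil[OF sym])

definition slist :: "nat set \<Rightarrow> nat \<Rightarrow> nat list" where
  "slist S n = sorted_list_of_set S @ [n+1]"

definition gcode :: "nat set \<Rightarrow> nat \<Rightarrow> nat list" where
  "gcode S n = gaps (slist S n)"

lemma slist_props:
  assumes "S \<subseteq> {1..n}" "1 \<in> S"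
  shows "sorted_wrt (<) (slist S n)" "hd (slist S n) = 1" "last (slist S n) = n+1"
    "length (slist S n) = card S + 1"
proof -
  have fin: "finite S" using assms(1) finite_subset by blast
  show "sorted_wrt (<) (slist S n)" unfolding slist_def sorted_wrt_append
    using assms(1) fin by (auto simp: strict_sorted_list_of_set)
  have "Min S = 1" using assms fin by (intro Min_eqI) auto
  moreover have "S \<noteq> {}" using assms(2) by auto
  ultimately show "hd (slist S n) = 1" unfolding slist_def
    using sorted_list_of_set_nonempty[OF fin] by simp
  show "last (slist S n) = n+1" by (simp add: slist_def)
  show "length (slist S n) = card S + 1" by (simp add: slist_def)
qed

lemma gcode_inj:
  assumes "S \<subseteq> {1..n}" "1 \<in> S" "S' \<subseteq> {1..n}" "1 \<in> S'" "gcode S n = gcode S' n"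
  shows "S = S'"
proof -
  have "slist S n = slist S' n"
    using gaps_inj[of "slist S n" "slist S' n"] slist_props[OF assms(1,2)] slist_props[OF assms(3,4)]
      assms(5) strict_sorted_imp_sorted unfolding gcode_def by (auto simp: slist_def)
  then have "sorted_list_of_set S = sorted_list_of_set S'" by (simp add: slist_def)
  moreover have "finite S" "finite S'" using assms finite_subset by auto
  ultimately show ?thesis by (metis sorted_list_of_set.set_sorted_key_list_of_set)
qed

lemma gcode_sum_len:
  assumes "S \<subseteq> {1..n}" "1 \<in> S"
  shows "sum_list (gcode S n) = n" "length (gcode S n) = card S"
proof -
  note p = slist_props[OF assms]
  have "slist S n \<noteq> []" by (simp add: slist_def)
  then show "sum_list (gcode S n) = n" unfolding gcode_def
    using sum_gaps[of "slist S n"] p strict_sorted_imp_sorted[OF p(1)] by simp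
  show "length (gcode S n) = card S" unfolding gcode_def using p length_gaps by simp
qed

lemma gap_block:
  assumes g: "ograph n E" and n: "1 \<le> n" and i: "i < card (starts n E)"
  shows "\<exists>B\<in>homog_blocks n E. Min B = slist (starts n E) n ! i \<and>
           {slist (starts n E) n ! i..<slist (starts n E) n ! Suc i} \<subseteq> B"
proof -
  let ?S = "starts n E"
  let ?xs = "slist ?S n"
  let ?ls = "sorted_list_of_set ?S"
  note sp = starts_props[OF g n]
  note sl = slist_props[OF sp(1,2)]
  have lls: "length ?ls = card ?S" by simp
  have xi: "?xs ! i = ?ls ! i" using i lls by (simp add: slist_def nth_append)
  have sS: "?xs ! i \<in> ?S" using xi i lls nth_mem[of i ?ls] sp(3) by (metis set_sorted_list_of_set)
  then obtain B where B: "B \<in> homog_blocks n E" "Min B = ?xs ! i" unfolding starts_def by auto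
  have tle: "?xs ! Suc i \<le> n + 1"
  proof (cases "Suc i < card ?S")
    case True
    then have "?xs ! Suc i = ?ls ! Suc i" using lls by (simp add: slist_def nth_append)
    moreover have "?ls ! Suc i \<in> ?S" using True lls nth_mem[of "Suc i" ?ls] sp(3) by (metis set_sorted_list_of_set)
    ultimately show ?thesis using sp(1) by auto
  next
    case False
    then have "Suc i = card ?S" using i by simp
    then show ?thesis using lls by (simp add: slist_def nth_append)
  qed
  have "{?xs ! i..<?xs ! Suc i} \<subseteq> B"
  proof
    fix y assume y: "y \<in> {?xs ! i..<?xs ! Suc i}"
    have s1: "1 \<le> ?xs ! i" using sS sp(1) by auto
    have yn: "y \<in> {1..n}" using y s1 tle by auto
    obtain B' where B': "B' \<in> homog_blocks n E" "y \<in> B'" using block_of[OF yn] by blast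
    have "st ?S y = ?xs ! i" unfolding st_def
    proof (rule Max_eqI)
      show "finite {s \<in> ?S. s \<le> y}" using sp(3) by simp
      show "?xs ! i \<in> {s \<in> ?S. s \<le> y}" using sS y by simp
      fix u assume u: "u \<in> {s \<in> ?S. s \<le> y}"
      then have "u \<in> set ?ls" using sp(3) by simp
      then obtain j where j: "j < length ?ls" "?ls ! j = u" by (meson in_set_conv_nth)
      have xj: "?xs ! j = u" using j by (simp add: slist_def nth_append)
      have jl: "j < length ?xs" "Suc i < length ?xs" using j i sl(4) lls by auto
      show "u \<le> ?xs ! i"
      proof (rule ccontr)
        assume "\<not> u \<le> ?xs ! i"
        then have "\<not> j \<le> i"
          using sorted_wrt_nth_less[OF sl(1), of j i] jl xj i sl(4) by (cases "j = i") auto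
        then have "Suc i \<le> j" by simp
        then have "?xs ! Suc i \<le> ?xs ! j"
          using sorted_wrt_nth_less[OF sl(1), of "Suc i" j] jl by (cases "Suc i = j") auto
        then show False using xj u y by auto
      qed
    qed
    then have "Min B' = Min B" using st_block[OF g B'] B(2) by simp
    then have "B' = B" using min_inj[OF g B'(1) B(1)] by simp
    then show "y \<in> B" using B' by simp
  qed
  then show ?thesis using B by blast
qed

lemma gap_count:
  assumes g: "ograph n E" and n: "1 \<le> n"
  shows "length (filter (\<lambda>x. M < x) (gcode (starts n E) n))
           \<le> card {B\<in>homog_blocks n E. M < card B}"
proof -
  let ?S = "starts n E"
  let ?xs = "slist ?S n"
  let ?g = "gcode ?S n"
  let ?I = "{i. i < length ?g \<and> M < ?g ! i}"
  note sp = starts_props[OF g n]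
  note sl = slist_props[OF sp(1,2)]
  have lg: "length ?g = card ?S" using gcode_sum_len[OF sp(1,2)] by simp
  define f where "f i = (SOME B. B \<in> homog_blocks n E \<and> Min B = ?xs ! i \<and> {?xs ! i..<?xs ! Suc i} \<subseteq> B)" for i
  have fP: "f i \<in> homog_blocks n E \<and> Min (f i) = ?xs ! i \<and> {?xs ! i..<?xs ! Suc i} \<subseteq> f i"
    if "i < card ?S" for i
    unfolding f_def by (rule someI_ex) (use gap_block[OF g n that] in blast)
  have gi: "?g ! i = ?xs ! Suc i - ?xs ! i" if "i < card ?S" for i
    unfolding gcode_def using nth_gaps[of i ?xs] that sl(4) by simp
  have inj: "inj_on f ?I"
  proof (rule inj_onI)
    fix i j assume "i \<in> ?I" "j \<in> ?I" "f i = f j"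
    then have ij: "i < card ?S" "j < card ?S" "?xs ! i = ?xs ! j" using fP lg by auto (metis fP)
    have "distinct ?xs" using sl(1) strict_sorted_iff by blast
    then show "i = j" using nth_eq_iff_index_eq[of ?xs i j] ij sl(4) by simp
  qed
  have sub: "f ` ?I \<subseteq> {B\<in>homog_blocks n E. M < card B}"
  proof
    fix B assume "B \<in> f ` ?I"
    then obtain i where i: "i < card ?S" "M < ?g ! i" "B = f i" using lg by auto
    have Bh: "B \<in> homog_blocks n E" using fP[OF i(1)] i(3) by simp
    have "finite B" using homog_blocks_finite Bh
      by (metis finite_atLeastAtMost homog_blocks_interval)
    then have "card {?xs ! i..<?xs ! Suc i} \<le> card B" using fP[OF i(1)] i(3) card_mono by blast
    then have "?g ! i \<le> card B" using gi[OF i(1)] by simp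
    then show "B \<in> {B\<in>homog_blocks n E. M < card B}" using i(2) Bh by simp
  qed
  have "length (filter (\<lambda>x. M < x) ?g) = card ?I" by (rule length_filter_conv_card)
  also have "\<dots> \<le> card {B\<in>homog_blocks n E. M < card B}"
    by (rule card_inj_on_le[OF inj sub]) (simp add: homog_blocks_finite)
  finally show ?thesis .
qed

lemma bs_mset: "mset (block_seq n E) = image_mset card (mset_set (homog_blocks n E))"
  by (simp add: block_seq_def)

lemma bs_length: "length (block_seq n E) = card (homog_blocks n E)"
proof -
  have "length (block_seq n E) = size (mset (block_seq n E))" by simp
  also have "\<dots> = card (homog_blocks n E)" by (simp add: bs_mset)
  finally show ?thesis .
qed

lemma bs_filter: "length (filter p (block_seq n E)) = card {B\<in>homog_blocks n E. p (card B)}"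
proof -
  have "length (filter p (block_seq n E)) = size (mset (filter p (block_seq n E)))" by (rule size_mset[symmetric])
  also have "\<dots> = size (filter_mset p (image_mset card (mset_set (homog_blocks n E))))"
    by (simp add: bs_mset)
  also have "\<dots> = size (image_mset card (filter_mset (\<lambda>B. p (card B)) (mset_set (homog_blocks n E))))"
    by (simp add: filter_mset_image_mset)
  also have "\<dots> = card {B\<in>homog_blocks n E. p (card B)}"
    using homog_blocks_finite by simp
  finally show ?thesis .
qed

lemma bs_set: "x \<in> set (block_seq n E) \<Longrightarrow> 1 \<le> x"
proof -
  assume "x \<in> set (block_seq n E)"
  then have "x \<in># mset (block_seq n E)" by simp
  then have "x \<in> card ` homog_blocks n E" using homog_blocks_finite by (simp add: bs_mset)
  then obtain B where B: "B \<in> homog_blocks n E" "x = card B" by auto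
  obtain a b where "1 \<le> a" "a \<le> b" "b \<le> n" "B = {a..b}" "Min B = a" using blk_min[OF B(1)] by blast
  then show "1 \<le> x" using B by simp
qed

lemma length_le_sum: "(\<forall>x\<in>set xs. 1 \<le> x) \<Longrightarrow> length xs \<le> sum_list (xs::nat list)"
  by (induction xs) auto

lemma hyp_consequences:
  assumes h: "sum_list (drop (k + 1) (block_seq n E)) \<le> M"
  shows "card (homog_blocks n E) \<le> k + 1 + M"
    "card {B\<in>homog_blocks n E. M < card B} \<le> k + 1"
proof -
  let ?bs = "block_seq n E"
  have "length (drop (k+1) ?bs) \<le> sum_list (drop (k+1) ?bs)"
    using bs_set by (intro length_le_sum) (meson in_set_dropD)
  then show "card (homog_blocks n E) \<le> k + 1 + M" using h bs_length[of n E] by simp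
  have "\<forall>x\<in>set (drop (k+1) ?bs). x \<le> M"
    using h member_le_sum_list[of _ "drop (k+1) ?bs"] by fastforce
  then have "filter (\<lambda>x. M < x) (drop (k+1) ?bs) = []" by (simp add: filter_empty_conv) (meson not_less)
  then have "length (filter (\<lambda>x. M < x) ?bs) = length (filter (\<lambda>x. M < x) (take (k+1) ?bs))"
    by (metis append_Nil2 append_take_drop_id filter_append)
  also have "\<dots> \<le> k + 1" by (metis length_filter_le length_take min.bounded_iff nle_le)
  finally show "card {B\<in>homog_blocks n E. M < card B} \<le> k + 1" by (simp add: bs_filter)
qed

definition Sset :: "nat \<Rightarrow> nat \<Rightarrow> nat \<Rightarrow> nat \<Rightarrow> nat set set" where
  "Sset L M k n = {S. S \<subseteq> {1..n} \<and> 1 \<in> S \<and> gcode S n \<in> Gset L M k n}"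

lemma Gset_finite: "finite (Gset L M k n)"
proof -
  have "Gset L M k n \<subseteq> {xs. set xs \<subseteq> {0..n} \<and> length xs \<le> L}"
  proof
    fix g assume g: "g \<in> Gset L M k n"
    have "\<forall>x\<in>set g. x \<le> n" using g member_le_sum_list[of _ g] by (auto simp: Gset_def)
    then show "g \<in> {xs. set xs \<subseteq> {0..n} \<and> length xs \<le> L}" using g by (auto simp: Gset_def)
  qed
  then show ?thesis by (rule finite_subset) (rule finite_lists_length_le, simp)
qed

lemma card_Sset: "card (Sset L M k n) \<le> card (Gset L M k n)"
proof (rule card_inj_on_le[OF _ _ Gset_finite])
  show "inj_on (\<lambda>S. gcode S n) (Sset L M k n)"
  proof (rule inj_onI)
    fix S S' assume "S \<in> Sset L M k n" "S' \<in> Sset L M k n" "gcode S n = gcode S' n"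
    then show "S = S'" using gcode_inj[of S n S'] unfolding Sset_def by blast
  qed
  show "(\<lambda>S. gcode S n) ` Sset L M k n \<subseteq> Gset L M k n" by (auto simp: Sset_def)
qed

lemma Sset_finite: "finite (Sset L M k n)"
proof -
  have "Sset L M k n \<subseteq> Pow {1..n}" by (auto simp: Sset_def)
  then show ?thesis by (rule finite_subset) simp
qed

lemma Sset_card_le: "S \<in> Sset L M k n \<Longrightarrow> card S \<le> L"
  using gcode_sum_len[of S n] by (auto simp: Sset_def Gset_def)

lemma card_target:
  "card (SIGMA S:Sset L M k n. Pow (S \<times> S)) \<le> card (Sset L M k n) * 2 ^ (L * L)"
proof -
  have fS: "\<And>S. S \<in> Sset L M k n \<Longrightarrow> finite S"
    by (auto simp: Sset_def intro: finite_subset)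
  have "card (SIGMA S:Sset L M k n. Pow (S \<times> S)) = (\<Sum>S\<in>Sset L M k n. card (Pow (S \<times> S)))"
    using Sset_finite fS by (subst card_SigmaI) auto
  also have "\<dots> \<le> (\<Sum>S\<in>Sset L M k n. 2 ^ (L * L))"
  proof (rule sum_mono)
    fix S assume S: "S \<in> Sset L M k n"
    have "card (Pow (S \<times> S)) = 2 ^ (card S * card S)"
      using fS[OF S] by (simp add: card_Pow card_cartesian_product)
    also have "\<dots> \<le> 2 ^ (L * L)"
      using Sset_card_le[OF S] by (intro power_increasing mult_le_mono) auto
    finally show "card (Pow (S \<times> S)) \<le> 2 ^ (L * L)" .
  qed
  also have "\<dots> = card (Sset L M k n) * 2 ^ (L * L)" by simp
  finally show ?thesis .
qed

lemma main_bound: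
  fixes P :: "(nat \<times> (nat \<times> nat) set) set" and k M n :: nat
  assumes hp: "hereditary P"
    and hyp: "\<forall>(n, E) \<in> P. sum_list (drop (k + 1) (block_seq n E)) \<le> M"
    and n: "1 \<le> n"
  shows "card (members P n) \<le>
     card {xs. set xs \<subseteq> {0..M+1} \<and> length xs \<le> k+1+M} * ((k+1) * (n+1)^k) * 2 ^ ((k+1+M) * (k+1+M))"
proof -
  let ?L = "k+1+M"
  let ?c = "\<lambda>E. (starts n E, codeA n E)"
  let ?T = "SIGMA S:Sset ?L M k n. Pow (S \<times> S)"
  have og: "ograph n E" if "E \<in> members P n" for E
    using that hp unfolding members_def hereditary_def by auto
  have inj: "inj_on ?c (members P n)"
  proof (rule inj_onI)
    fix E E' assume a: "E \<in> members P n" "E' \<in> members P n" "?c E = ?c E'"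
    have "E = recon n (starts n E) (codeA n E)" using reconstruct[OF og[OF a(1)]] by simp
    also have "\<dots> = recon n (starts n E') (codeA n E')" using a(3) by simp
    also have "\<dots> = E'" using reconstruct[OF og[OF a(2)]] by simp
    finally show "E = E'" .
  qed
  have sub: "?c ` members P n \<subseteq> ?T"
  proof
    fix z assume "z \<in> ?c ` members P n"
    then obtain E where E: "E \<in> members P n" "z = ?c E" by auto
    note g = og[OF E(1)]
    have "(n, E) \<in> P" using E(1) by (simp add: members_def)
    then have h: "sum_list (drop (k + 1) (block_seq n E)) \<le> M" using hyp by auto
    note hc = hyp_consequences[OF h]
    note sp = starts_props[OF g n]
    have "gcode (starts n E) n \<in> Gset ?L M k n"
      using gcode_sum_len[OF sp(1,2)] sp(4) hc gap_count[OF g n, of M]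
      unfolding Gset_def by simp
    then have "starts n E \<in> Sset ?L M k n" using sp unfolding Sset_def by simp
    moreover have "codeA n E \<in> Pow (starts n E \<times> starts n E)" using codeA_sub[OF g n] by simp
    ultimately show "z \<in> ?T" using E(2) by simp
  qed
  have fT: "finite ?T" using Sset_finite
    by (intro finite_SigmaI) (auto simp: Sset_def intro: finite_subset)
  have "card (members P n) \<le> card ?T" by (rule card_inj_on_le[OF inj sub fT])
  also have "\<dots> \<le> card (Sset ?L M k n) * 2 ^ (?L * ?L)" by (rule card_target)
  also have "\<dots> \<le> card (Gset ?L M k n) * 2 ^ (?L * ?L)" using card_Sset by simp
  also have "\<dots> \<le> card {xs. set xs \<subseteq> {0..M+1} \<and> length xs \<le> ?L} * ((k+1) * (n+1)^k) * 2 ^ (?L * ?L)"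
    using card_Gset by simp
  finally show ?thesis .
qed

theorem lemma8:
  fixes P :: "(nat \<times> (nat \<times> nat) set) set" and k M :: nat
  assumes "hereditary P"
    and "\<forall>(n, E) \<in> P. sum_list (drop (k + 1) (block_seq n E)) \<le> M"
  shows "(\<lambda>n. real (card (members P n))) \<in> O(\<lambda>n. real n ^ k)"
proof -
  define C where "C = card {xs. set xs \<subseteq> {0..M+1} \<and> length xs \<le> k+1+M} * (k+1) * 2 ^ ((k+1+M) * (k+1+M))"
  have "eventually (\<lambda>n. norm (real (card (members P n))) \<le> real (C * 2^k) * norm (real n ^ k)) at_top"
    using eventually_ge_at_top[of "1::nat"]
  proof eventually_elim
    case (elim n)
    have "card (members P n) \<le> C * (n+1)^k"
      using main_bound[OF assms elim] unfolding C_def by (simp add: algebra_simps)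
    also have "\<dots> \<le> C * (2*n)^k" using elim by (intro mult_le_mono2 power_mono) auto
    also have "\<dots> = C * 2^k * n^k" by (simp add: power_mult_distrib)
    finally have "real (card (members P n)) \<le> real (C * 2^k * n^k)" by linarith
    then show ?case by simp
  qed
  then show ?thesis by (rule bigoI)
qed

end
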